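(* Let $k\ge1$, $n\ge 2k+1$ and let $\{x,y\}$ be a connector. Then $(x,f(x),y,f(y))$ is a $4$-cycle in the Kneser graph $K(n,k)$.
   Context: Vertices of $K(n,k)$ are identified with $X_{n,k}$, the binary strings of length $n$ with $k$ ones (characteristic vectors); two strings are adjacent iff they have no $1$ at a common position. Positions are cyclic mod $n$; $\sigma^i(z)$ denotes the cyclic right shift of $z$ by $i$ positions. Cyclic parenthesis matching: $1$s opening, $0$s closing brackets; each $1$ at position $i$ is matched to the last $0$ of the shortest cyclic substring starting at $i$ going right with equally many $0$s and $1$s (all $1$s get matched, $n-2k$ zeros are unmatched). $f(x)$ is $x$ with all matched bits complemented. A matched pair (a $1$ and the $0$ matched to it) is visible if it is not enclosed by another matched pair, i.e. there is no other matched pair whose cyclic interval from its $1$ to its $0$ contains both positions of the given pair. $D$ denotes the set of Dyck words (equally many $0$s and $1$s, at least as many $1$s as $0$s in every prefix, including the empty word). A connector is an unordered pair $\{x,y\}$ of strings in $X_{n,k}$ such that for some $i\ge0$, some $u,w\in D$ and some binary strings $p,q,r$, $x=\sigma^i(p\,1\,u\,0\,q\,0\,w\,0\,r)$ and $y=\sigma^i(p\,0\,u\,0\,q\,1\,w\,0\,r)$, where in $x$ the displayed $1$ and $0$ around $u$ are matched to each other and form a visible pair, and the two displayed $0$s around $w$ are unmatched in $x$. *)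

theory Defs
  imports Main
begin

text \<open>Binary strings are lists of booleans; True is a 1, False is a 0.
  Positions are 0 .. n-1 and are taken cyclically mod n.\<close>

definition Xnk :: "nat \<Rightarrow> nat \<Rightarrow> bool list set" where
  "Xnk n k = {z. length z = n \<and> count_list z True = k}"

definition kneser_adj :: "nat \<Rightarrow> nat \<Rightarrow> bool list \<Rightarrow> bool list \<Rightarrow> bool" where
  "kneser_adj n k x y \<longleftrightarrow> x \<in> Xnk n k \<and> y \<in> Xnk n k \<and> (\<forall>j<n. \<not> (x ! j \<and> y ! j))"

text \<open>Cyclic right shift by i positions: (sigma i z) ! ((j + i) mod n) = z ! j.\<close>
definition sigma :: "nat \<Rightarrow> bool list \<Rightarrow> bool list" where
  "sigma i z = rotate (length z - i mod length z) z"

definition ones_sub :: "bool list \<Rightarrow> nat \<Rightarrow> nat \<Rightarrow> nat" where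
  "ones_sub x i m = card {t. t < m \<and> x ! ((i + t) mod length x)}"

definition balanced_sub :: "bool list \<Rightarrow> nat \<Rightarrow> nat \<Rightarrow> bool" where
  "balanced_sub x i m \<longleftrightarrow> 2 * ones_sub x i m = m"

text \<open>Position of the 0 matched to the 1 at position i: last position of the
  shortest (nonempty) balanced cyclic substring starting at i.\<close>
definition match :: "bool list \<Rightarrow> nat \<Rightarrow> nat" where
  "match x i = (i + (LEAST m. 0 < m \<and> balanced_sub x i m) - 1) mod length x"

definition matched :: "bool list \<Rightarrow> nat \<Rightarrow> bool" where
  "matched x j \<longleftrightarrow> x ! j \<or> (\<exists>i < length x. x ! i \<and> match x i = j)"

definition f :: "bool list \<Rightarrow> bool list" where
  "f x = map (\<lambda>j. if matched x j then \<not> x ! j else x ! j) [0..<length x]"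

definition cyc_interval :: "nat \<Rightarrow> nat \<Rightarrow> nat \<Rightarrow> nat set" where
  "cyc_interval n a b = {(a + t) mod n | t. t \<le> (b + n - a) mod n}"

definition visible :: "bool list \<Rightarrow> nat \<Rightarrow> bool" where
  "visible x i \<longleftrightarrow> x ! i \<and>
     \<not> (\<exists>i' < length x. i' \<noteq> i \<and> x ! i' \<and>
          i \<in> cyc_interval (length x) i' (match x i') \<and>
          match x i \<in> cyc_interval (length x) i' (match x i'))"

definition dyck :: "bool list \<Rightarrow> bool" where
  "dyck u \<longleftrightarrow> count_list u True = count_list u False \<and>
     (\<forall>m \<le> length u. count_list (take m u) False \<le> count_list (take m u) True)"

definition connector_ord :: "nat \<Rightarrow> nat \<Rightarrow> bool list \<Rightarrow> bool list \<Rightarrow> bool" where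
  "connector_ord n k x y \<longleftrightarrow> x \<in> Xnk n k \<and> y \<in> Xnk n k \<and>
     (\<exists>i u w p q r. dyck u \<and> dyck w \<and>
        x = sigma i (p @ [True] @ u @ [False] @ q @ [False] @ w @ [False] @ r) \<and>
        y = sigma i (p @ [False] @ u @ [False] @ q @ [True] @ w @ [False] @ r) \<and>
        (let a = (length p + i) mod n;
             b = (length p + 1 + length u + i) mod n;
             c = (length p + 2 + length u + length q + i) mod n;
             d = (length p + 3 + length u + length q + length w + i) mod n
         in match x a = b \<and> visible x a \<and> \<not> matched x c \<and> \<not> matched x d))"

definition connector :: "nat \<Rightarrow> nat \<Rightarrow> bool list \<Rightarrow> bool list \<Rightarrow> bool" where
  "connector n k x y \<longleftrightarrow> connector_ord n k x y \<or> connector_ord n k y x"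

definition four_cycle :: "nat \<Rightarrow> nat \<Rightarrow> bool list \<Rightarrow> bool list \<Rightarrow> bool list \<Rightarrow> bool list \<Rightarrow> bool" where
  "four_cycle n k a b c d \<longleftrightarrow> distinct [a, b, c, d] \<and>
     kneser_adj n k a b \<and> kneser_adj n k b c \<and> kneser_adj n k c d \<and> kneser_adj n k d a"

end

theory Submission
  imports Defs
begin


definition W :: "bool list \<Rightarrow> nat \<Rightarrow> nat \<Rightarrow> int" where
  "W x i m = 2 * int (ones_sub x i m) - int m"

lemma ones_sub_Suc:
  "ones_sub x i (Suc m) = ones_sub x i m + (if x ! ((i + m) mod length x) then 1 else 0)"
proof -
  have "{t. t < Suc m \<and> x ! ((i + t) mod length x)} =
        {t. t < m \<and> x ! ((i + t) mod length x)} \<union> (if x ! ((i + m) mod length x) then {m} else {})"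
    by (auto simp: less_Suc_eq)
  then show ?thesis unfolding ones_sub_def by auto
qed

lemma W_0[simp]: "W x i 0 = 0"
  by (simp add: W_def ones_sub_def)

lemma W_Suc:
  "W x i (Suc m) = W x i m + (if x ! ((i + m) mod length x) then 1 else -1)"
  by (simp add: W_def ones_sub_Suc)

lemma W_step: "\<bar>W x i (Suc m) - W x i m\<bar> \<le> 1"
  by (simp add: W_Suc)

lemma W_add:
  assumes "length x > 0"
  shows "W x i (m1 + m2) = W x i m1 + W x ((i + m1) mod length x) m2"
proof (induction m2)
  case 0 then show ?case by simp
next
  case (Suc m2)
  have "((i + m1) mod length x + m2) mod length x = (i + (m1 + m2)) mod length x"
    by (simp add: mod_add_left_eq add.assoc)
  then show ?case using Suc by (simp add: W_Suc)
qed

lemma ones_sub_mod: "ones_sub x (i mod length x) m = ones_sub x i m"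
  unfolding ones_sub_def by (simp add: mod_add_left_eq)

lemma W_mod: "W x (i mod length x) m = W x i m"
  by (simp add: W_def ones_sub_mod)

lemma count_card: "count_list xs True = card {j. j < length xs \<and> xs ! j}"
  by (simp add: count_list_eq_length_filter length_filter_conv_card)

lemma W_0_n:
  "W x 0 (length x) = 2 * int (count_list x True) - int (length x)"
proof -
  have "{t. t < length x \<and> x ! ((0 + t) mod length x)} = {j. j < length x \<and> x ! j}" by auto
  then show ?thesis by (simp add: W_def ones_sub_def count_card)
qed

lemma W_n:
  assumes "length x > 0"
  shows "W x i (length x) = 2 * int (count_list x True) - int (length x)"
proof -
  let ?n = "length x"
  have "W x 0 (i mod ?n + ?n) = W x 0 (i mod ?n) + W x (i mod ?n) ?n"
    using W_add[OF assms, of 0 "i mod ?n" ?n] by simp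
  moreover have "W x 0 (?n + i mod ?n) = W x 0 ?n + W x 0 (i mod ?n)"
    using W_add[OF assms, of 0 ?n "i mod ?n"] by simp
  ultimately have "W x (i mod ?n) ?n = W x 0 ?n" by (simp add: add.commute)
  then show ?thesis using W_mod[of x i] W_0_n by simp
qed

lemma balanced_W: "balanced_sub x i m \<longleftrightarrow> W x i m = 0"
  unfolding balanced_sub_def W_def by linarith

lemma first_zero:
  fixes h :: "nat \<Rightarrow> int"
  assumes step: "\<And>t. \<bar>h (Suc t) - h t\<bar> \<le> 1"
    and "h s > 0" and "h e \<le> 0" and "s \<le> e"
  shows "\<exists>m. s < m \<and> m \<le> e \<and> h m = 0 \<and> (\<forall>m'. s \<le> m' \<and> m' < m \<longrightarrow> h m' > 0)"
proof -
  define m where "m = (LEAST m. s < m \<and> h m \<le> 0)"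
  have ex: "s < e \<and> h e \<le> 0" using assms by (metis le_neq_implies_less not_le)
  then have m1: "s < m \<and> h m \<le> 0" unfolding m_def by (rule LeastI)
  have m2: "m \<le> e" unfolding m_def using ex by (rule Least_le)
  have pos: "h m' > 0" if "s \<le> m'" "m' < m" for m'
  proof (cases "m' = s")
    case True then show ?thesis using assms(2) by simp
  next
    case False
    then have "s < m'" using that by simp
    then show ?thesis using not_less_Least[OF that(2)[unfolded m_def]] by auto
  qed
  obtain m0 where m0: "m = Suc m0" using m1 by (cases m) auto
  have "h m0 > 0" using pos[of m0] m0 m1 by simp
  then have "h (Suc m0) = 0" using m1 step[of m0] unfolding m0 by linarith
  then have "h m = 0" using m0 by simp
  then show ?thesis using m1 m2 pos by blast
qed

lemma last_cross:
  fixes h :: "nat \<Rightarrow> int"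
  assumes step: "\<And>t. \<bar>h (Suc t) - h t\<bar> \<le> 1"
    and "h s \<le> v" and "h e > v" and "s \<le> e"
  shows "\<exists>t. s \<le> t \<and> t < e \<and> h t = v \<and> h (Suc t) = v + 1 \<and> (\<forall>t'. t < t' \<and> t' \<le> e \<longrightarrow> h t' > v)"
  using assms(3,4)
proof (induction e)
  case 0 then show ?case using assms(2) by simp
next
  case (Suc e)
  have se: "s \<le> e" using Suc.prems assms(2) by (metis le_SucE not_le)
  show ?case
  proof (cases "h e > v")
    case True
    from Suc.IH[OF True se] obtain t where "s \<le> t \<and> t < e \<and> h t = v \<and> h (Suc t) = v + 1 \<and> (\<forall>t'. t < t' \<and> t' \<le> e \<longrightarrow> h t' > v)"
      by blast
    then show ?thesis using Suc.prems by (rule_tac x=t in exI) (auto simp: le_Suc_eq)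
  next
    case False
    then have "h e = v" "h (Suc e) = v + 1" using Suc.prems step[of e] by linarith+
    then show ?thesis using se Suc.prems by (rule_tac x=e in exI) (auto simp: le_Suc_eq)
  qed
qed

lemma W_1: "i < length x \<Longrightarrow> W x i 1 = (if x ! i then 1 else -1)"
  using W_Suc[of x i 0] by simp

lemma match_eq:
  assumes "0 < m" "W x i m = 0" "\<forall>m'. 0 < m' \<and> m' < m \<longrightarrow> W x i m' \<noteq> 0"
  shows "match x i = (i + m - 1) mod length x"
    and "(LEAST m. 0 < m \<and> balanced_sub x i m) = m"
proof -
  show L: "(LEAST m. 0 < m \<and> balanced_sub x i m) = m"
  proof (rule Least_equality)
    show "0 < m \<and> balanced_sub x i m" using assms by (simp add: balanced_W)
  next
    fix y assume "0 < y \<and> balanced_sub x i y"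
    then show "m \<le> y" using assms(3) by (metis balanced_W not_le)
  qed
  show "match x i = (i + m - 1) mod length x"
    unfolding match_def L ..
qed

lemma match_props:
  assumes "2 * count_list x True < length x" "i < length x" "x ! i"
  obtains m0 where "0 < m0" "m0 \<le> length x" "W x i m0 = 0"
    "\<forall>m. 0 < m \<and> m < m0 \<longrightarrow> W x i m > 0"
    "match x i = (i + m0 - 1) mod length x"
proof -
  have "W x i 1 > 0" using W_1[OF assms(2)] assms(3) by simp
  moreover have "W x i (length x) \<le> 0"
  proof -
    have "x \<noteq> []" using assms(2) by auto
    then show ?thesis using W_n[of x i] assms(1) by simp
  qed
  moreover have "1 \<le> length x" using assms(2) by simp
  ultimately obtain m where m: "1 < m" "m \<le> length x" "W x i m = 0"
     "\<forall>m'. 1 \<le> m' \<and> m' < m \<longrightarrow> W x i m' > 0"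
    using first_zero[of "W x i" 1 "length x", OF W_step] by blast
  then have pos: "\<forall>m'. 0 < m' \<and> m' < m \<longrightarrow> W x i m' > 0" by auto
  then have ne: "\<forall>m'. 0 < m' \<and> m' < m \<longrightarrow> W x i m' \<noteq> 0" by force
  have "match x i = (i + m - 1) mod length x"
    using match_eq(1)[OF _ _ ne] m by simp
  then show ?thesis using that[of m] m pos by simp
qed

lemma match_less: "length x > 0 \<Longrightarrow> match x i < length x"
  by (simp add: match_def)

lemma match_zero:
  assumes "2 * count_list x True < length x" "i < length x" "x ! i"
  shows "\<not> x ! (match x i)"
proof -
  obtain m0 where m0: "0 < m0" "m0 \<le> length x" "W x i m0 = 0"
    "\<forall>m. 0 < m \<and> m < m0 \<longrightarrow> W x i m > 0"
    "match x i = (i + m0 - 1) mod length x"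
    using match_props[OF assms] by blast
  have "m0 \<noteq> 1" using m0(3) W_1[OF assms(2)] assms(3) by auto
  then obtain m1 where m1: "m0 = Suc m1" "m1 > 0" using m0(1) by (cases m0) auto
  have "W x i m1 > 0" using m0(4) m1 by auto
  then have "\<not> x ! ((i + m1) mod length x)" using W_Suc[of x i m1] m0(3) m1(1)
    by (auto split: if_splits)
  then show ?thesis using m0(5) m1 by simp
qed

lemma mod_cancel_nat:
  assumes "(a + c) mod n = (b + c) mod (n::nat)" shows "a mod n = b mod n"
proof (cases "n = 0")
  case True then show ?thesis using assms by simp
next
  case False
  have h: "((z + c) mod n + (n - c mod n)) mod n = z mod n" for z
  proof -
    have "c mod n < n" using False by simp
    then have e: "z + c + (n - c mod n) = z + n * (1 + c div n)"
      using mod_mult_div_eq[of c n] by (simp add: algebra_simps; linarith)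
    have "(z + c + (n - c mod n)) mod n = z mod n" by (subst e) (rule mod_mult_self2)
    then show ?thesis by (simp add: mod_add_left_eq)
  qed
  show ?thesis using h[of a] h[of b] assms by simp
qed

lemma inj_aux:
  assumes n: "length x > 0" "i < length x" "j < length x" "0 < mi" "mi \<le> mj"
    "W x i mi = 0" "W x j mj = 0" "\<forall>m. 0 < m \<and> m < mj \<longrightarrow> W x j m > 0"
    "(i + mi - 1) mod length x = (j + mj - 1) mod length x"
  shows "i = j"
proof -
  let ?n = "length x"
  define e where "e = mj - mi"
  have "(i + (mi - 1)) mod ?n = ((j + e) + (mi - 1)) mod ?n"
    using assms(4,5,9) unfolding e_def by (simp add: algebra_simps)
  then have "i mod ?n = (j + e) mod ?n" by (rule mod_cancel_nat)
  then have je: "(j + e) mod ?n = i" using assms(2) by simp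
  show ?thesis
  proof (cases "e = 0")
    case True then show ?thesis using je assms(3) by simp
  next
    case False
    have "W x j (e + mi) = W x j e + W x ((j + e) mod ?n) mi" by (rule W_add[OF n(1)])
    then have "W x j e = 0" using je assms(6,7,5) unfolding e_def by simp
    moreover have "W x j e > 0" using assms(8) False assms(4) unfolding e_def by auto
    ultimately show ?thesis by simp
  qed
qed

lemma match_inj:
  assumes "2 * count_list x True < length x"
  shows "inj_on (match x) {i. i < length x \<and> x ! i}"
proof (rule inj_onI)
  fix i j assume i: "i \<in> {i. i < length x \<and> x ! i}" and j: "j \<in> {i. i < length x \<and> x ! i}"
    and eq: "match x i = match x j"
  obtain mi where mi: "0 < mi" "mi \<le> length x" "W x i mi = 0"
    "\<forall>m. 0 < m \<and> m < mi \<longrightarrow> W x i m > 0"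
    "match x i = (i + mi - 1) mod length x"
    using match_props[OF assms] i by blast
  obtain mj where mj: "0 < mj" "mj \<le> length x" "W x j mj = 0"
    "\<forall>m. 0 < m \<and> m < mj \<longrightarrow> W x j m > 0"
    "match x j = (j + mj - 1) mod length x"
    using match_props[OF assms] j by blast
  have n: "length x > 0" using i by auto
  show "i = j"
  proof (cases "mi \<le> mj")
    case True
    then show ?thesis using inj_aux[OF n, of i j mi mj] i j mi mj eq by auto
  next
    case False
    then show ?thesis using inj_aux[OF n, of j i mj mi] i j mi mj eq by auto
  qed
qed

lemma length_f[simp]: "length (f x) = length x"
  by (simp add: f_def)

lemma f_iff: "j < length x \<Longrightarrow> f x ! j \<longleftrightarrow> \<not> x ! j \<and> matched x j"
  by (auto simp: f_def matched_def)

lemma f_count: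
  assumes "2 * count_list x True < length x"
  shows "count_list (f x) True = count_list x True"
proof -
  have n: "length x > 0" using assms by (cases x) auto
  have "{j. j < length (f x) \<and> f x ! j} = match x ` {i. i < length x \<and> x ! i}"
  proof
    show "{j. j < length (f x) \<and> f x ! j} \<subseteq> match x ` {i. i < length x \<and> x ! i}"
      using f_iff by (auto simp: matched_def)
  next
    show "match x ` {i. i < length x \<and> x ! i} \<subseteq> {j. j < length (f x) \<and> f x ! j}"
      using f_iff match_less[OF n] match_zero[OF assms] by (auto simp: matched_def)
  qed
  then show ?thesis using card_image[OF match_inj[OF assms]] count_card[of "f x"] count_card[of x]
    by simp
qed

lemma f_good:
  assumes "x \<in> Xnk n k" "2 * k < n"
  shows "f x \<in> Xnk n k" "kneser_adj n k x (f x)"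
proof -
  have c: "2 * count_list x True < length x" using assms by (simp add: Xnk_def)
  show fx: "f x \<in> Xnk n k" using assms f_count[OF c] by (simp add: Xnk_def)
  show "kneser_adj n k x (f x)" unfolding kneser_adj_def using assms fx f_iff
    by (auto simp: Xnk_def)
qed



lemma length_sigma[simp]: "length (sigma i z) = length z"
  by (simp add: sigma_def)

lemma sigma_nth:
  assumes "length z > 0"
  shows "sigma i z ! ((j + i) mod length z) = z ! (j mod length z)"
proof -
  let ?n = "length z"
  have "sigma i z ! ((j + i) mod ?n) = z ! ((?n - i mod ?n + (j + i) mod ?n) mod ?n)"
    unfolding sigma_def using assms by (simp add: nth_rotate)
  also have "(?n - i mod ?n + (j + i) mod ?n) mod ?n = (?n - i mod ?n + (j + i)) mod ?n"
    by (simp add: mod_add_right_eq)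
  also have "?n - i mod ?n + (j + i) = j + ?n * (1 + i div ?n)"
    using mod_mult_div_eq[of i ?n] mod_less_divisor[OF assms, of i] by (simp add: algebra_simps; linarith)
  also have "(j + ?n * (1 + i div ?n)) mod ?n = j mod ?n" by (rule mod_mult_self2)
  finally show ?thesis .
qed

lemma ones_sub_sigma:
  assumes "length z > 0"
  shows "ones_sub (sigma i z) (j + i) m = ones_sub z j m"
proof -
  have "\<And>t. sigma i z ! ((j + i + t) mod length z) = z ! ((j + t) mod length z)"
  proof -
    fix t
    have "j + i + t = (j + t) + i" by simp
    then show "sigma i z ! ((j + i + t) mod length z) = z ! ((j + t) mod length z)"
      using sigma_nth[OF assms, where i=i and j="j+t"] by (metis add.commute add.left_commute)
  qed
  then show ?thesis unfolding ones_sub_def by simp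
qed

lemma W_sigma:
  assumes "length z > 0"
  shows "W (sigma i z) (j + i) m = W z j m"
  using ones_sub_sigma[OF assms] by (simp add: W_def)

lemma ones_sub_lin:
  assumes "j + m \<le> length z"
  shows "ones_sub z j m = count_list (take m (drop j z)) True"
  using assms
proof (induction m)
  case 0 then show ?case by (simp add: ones_sub_def)
next
  case (Suc m)
  have "take (Suc m) (drop j z) = take m (drop j z) @ [z ! (j + m)]"
    using Suc.prems by (simp add: take_Suc_conv_app_nth)
  then show ?case using Suc by (simp add: ones_sub_Suc)
qed

lemma count_TF: "count_list xs True + count_list xs False = length (xs :: bool list)"
  by (induction xs) auto

lemma dyck_W:
  assumes "dyck w" "z = pre @ True # w @ False # post"
  shows "\<forall>m. 0 < m \<and> m < length w + 2 \<longrightarrow> W z (length pre) m > 0"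
    and "W z (length pre) (length w + 2) = 0"
proof -
  have dz: "drop (length pre) z = True # w @ False # post" using assms(2) by simp
  have lz: "length pre + (length w + 2) \<le> length z" using assms(2) by simp
  show "\<forall>m. 0 < m \<and> m < length w + 2 \<longrightarrow> W z (length pre) m > 0"
  proof (intro allI impI)
    fix m assume m: "0 < m \<and> m < length w + 2"
    then obtain m1 where m1: "m = Suc m1" "m1 \<le> length w" by (cases m) auto
    have tk: "take m (drop (length pre) z) = True # take m1 w" using dz m1 by simp
    have o: "ones_sub z (length pre) m = 1 + count_list (take m1 w) True"
      using ones_sub_lin[of "length pre" m z] lz m tk by simp
    have "count_list (take m1 w) False \<le> count_list (take m1 w) True"
      using assms(1) m1 unfolding dyck_def by simp
    moreover have "count_list (take m1 w) True + count_list (take m1 w) False = m1"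
      using count_TF[of "take m1 w"] m1 by simp
    ultimately show "W z (length pre) m > 0" using o m1 by (simp add: W_def)
  qed
  have tk: "take (length w + 2) (drop (length pre) z) = True # w @ [False]" using dz by simp
  have o: "ones_sub z (length pre) (length w + 2) = 1 + count_list w True"
    using ones_sub_lin[of "length pre" "length w + 2" z] lz tk by simp
  have "count_list w True = count_list w False" using assms(1) unfolding dyck_def by simp
  then show "W z (length pre) (length w + 2) = 0"
    using o count_TF[of w] by (simp add: W_def)
qed

lemma dyck_W_neg:
  assumes "dyck w" "z = pre @ w @ False # post"
  shows "W z (length pre) (length w + 1) = -1"
proof -
  have dz: "drop (length pre) z = w @ False # post" using assms(2) by simp
  have lz: "length pre + (length w + 1) \<le> length z" using assms(2) by simp
  have tk: "take (length w + 1) (drop (length pre) z) = w @ [False]" using dz by simp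
  have o: "ones_sub z (length pre) (length w + 1) = count_list w True"
    using ones_sub_lin[of "length pre" "length w + 1" z] lz tk by simp
  have "count_list w True = count_list w False" using assms(1) unfolding dyck_def by simp
  then show ?thesis using o count_TF[of w] by (simp add: W_def)
qed

lemma off_inj:
  assumes "s1 < n" "s2 < n" "(oo + s1) mod n = (oo + s2) mod (n::nat)"
  shows "s1 = s2"
  using mod_cancel_nat[of s1 oo n s2] assms by (simp add: add.commute)

lemma off_surj:
  assumes "t < (n::nat)"
  shows "\<exists>s<n. (oo + s) mod n = t"
proof -
  define s where "s = (t + (n - oo mod n)) mod n"
  have "n > 0" using assms by simp
  have "(oo + s) mod n = (oo mod n + (t + (n - oo mod n))) mod n"
    unfolding s_def by (simp add: mod_add_right_eq mod_add_left_eq)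
  also have "oo mod n + (t + (n - oo mod n)) = t + n"
    using mod_less_divisor[OF \<open>n > 0\<close>, of oo] by simp
  finally show ?thesis using assms \<open>n > 0\<close> unfolding s_def by (rule_tac x=s in exI) (simp add: s_def)
qed

lemma cyc_aux:
  assumes "A < n" "D < (n::nat)"
  shows "((A + D) mod n + n - A) mod n = D"
proof (cases "A + D < n")
  case True then show ?thesis using assms by simp
next
  case False
  then have "(A + D) mod n = A + D - n" using assms by (simp add: le_mod_geq)
  then show ?thesis using False assms by simp
qed

lemma in_cyc:
  assumes "t \<le> s" "s \<le> e" "e < (n::nat)"
  shows "(oo + s) mod n \<in> cyc_interval n ((oo + t) mod n) ((oo + e) mod n)"
proof -
  have n: "n > 0" using assms by simp
  have e: "(oo + e) mod n = ((oo + t) mod n + (e - t)) mod n"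
  proof -
    have "((oo + t) mod n + (e - t)) mod n = (oo + t + (e - t)) mod n" by (rule mod_add_left_eq)
    also have "oo + t + (e - t) = oo + e" using assms by simp
    finally show ?thesis by simp
  qed
  have "((oo + e) mod n + n - (oo + t) mod n) mod n = e - t"
    unfolding e by (rule cyc_aux) (use assms n in auto)
  moreover have "(oo + s) mod n = ((oo + t) mod n + (s - t)) mod n"
  proof -
    have "((oo + t) mod n + (s - t)) mod n = (oo + t + (s - t)) mod n" by (rule mod_add_left_eq)
    also have "oo + t + (s - t) = oo + s" using assms by simp
    finally show ?thesis by simp
  qed
  ultimately show ?thesis unfolding cyc_interval_def using assms
    by (intro CollectI exI[of _ "s - t"]) auto
qed



lemma core:
  assumes k1: "k \<ge> 1" and nk: "n \<ge> 2 * k + 1"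
    and xX: "x \<in> Xnk n k" and yX: "y \<in> Xnk n k"
    and du: "dyck u" and dw: "dyck w"
    and xd: "x = sigma i (p @ [True] @ u @ [False] @ q @ [False] @ w @ [False] @ r)"
    and yd: "y = sigma i (p @ [False] @ u @ [False] @ q @ [True] @ w @ [False] @ r)"
    and a_def: "a = (length p + i) mod n"
    and b_def: "b = (length p + 1 + length u + i) mod n"
    and c_def: "c = (length p + 2 + length u + length q + i) mod n"
    and d_def: "d = (length p + 3 + length u + length q + length w + i) mod n"
    and ma: "match x a = b" and va: "visible x a" and mc: "\<not> matched x c" and md: "\<not> matched x d"
  shows "four_cycle n k x (f x) y (f y)"
proof -
  define zx where "zx = p @ [True] @ u @ [False] @ q @ [False] @ w @ [False] @ r"
  define zy where "zy = p @ [False] @ u @ [False] @ q @ [True] @ w @ [False] @ r"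
  define lp where "lp = length p"
  define lu where "lu = length u"
  define lq where "lq = length q"
  define lw where "lw = length w"
  define lr where "lr = length r"
  define c0 where "c0 = lp + 2 + lu + lq"
  have lx: "length x = n" and ly: "length y = n" and cx: "count_list x True = k"
    and cy: "count_list y True = k" using xX yX by (auto simp: Xnk_def)
  have lzx: "length zx = n" using lx xd zx_def by simp
  have lzy: "length zy = n" using lx xd zy_def by simp
  have n_eq: "n = lp + lu + lq + lw + lr + 4"
    using lzx unfolding zx_def lp_def lu_def lq_def lw_def lr_def by simp
  have npos: "n > 0" using n_eq by simp
  have k2: "2 * k < n" using nk by simp
  have c2x: "2 * count_list x True < length x" using cx lx k2 by simp
  have c2y: "2 * count_list y True < length y" using cy ly k2 by simp
  have xs: "x = sigma i zx" using xd zx_def by simp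
  have ys: "y = sigma i zy" using yd zy_def by simp
  define oo where "oo = lp + 3 + lu + lq + i"
  define a' where "a' = lw + 1 + lr + lp"
  have a_o: "a = (oo + a') mod n"
  proof -
    have "oo + a' = (lp + i) + n" unfolding oo_def a'_def n_eq by simp
    then show ?thesis unfolding a_def lp_def[symmetric] by simp
  qed
  have b_o: "b = (oo + (a' + 1 + lu)) mod n"
  proof -
    have e: "oo + (a' + 1 + lu) = (length p + 1 + length u + i) + n"
      unfolding oo_def a'_def n_eq lp_def lu_def by simp
    have "(oo + (a' + 1 + lu)) mod n = ((length p + 1 + length u + i) + n) mod n"
      by (simp only: e)
    also have "\<dots> = (length p + 1 + length u + i) mod n" by (rule mod_add_self2)
    finally show ?thesis using b_def by simp
  qed
  have c_o: "c = (oo + (n - 1)) mod n"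
  proof -
    have e: "oo + (n - 1) = (length p + 2 + length u + length q + i) + n"
      unfolding oo_def n_eq lp_def lu_def lq_def by simp
    have "(oo + (n - 1)) mod n = ((length p + 2 + length u + length q + i) + n) mod n"
      by (simp only: e)
    also have "\<dots> = (length p + 2 + length u + length q + i) mod n" by (rule mod_add_self2)
    finally show ?thesis using c_def by simp
  qed
  have d_o: "d = (oo + lw) mod n"
    unfolding d_def oo_def lp_def lu_def lq_def lw_def by (simp add: algebra_simps)
  have a'lt: "a' + lu + 2 < n" unfolding a'_def n_eq by simp
  have a'ge: "lw + 1 \<le> a'" unfolding a'_def by simp
  have c_c0: "c = (c0 + i) mod n" unfolding c_def c0_def lp_def lu_def lq_def by simp

  have xa: "x ! a"
  proof -
    have "x ! a = zx ! (lp mod n)" using sigma_nth[of zx i lp] lzx npos xs a_def lp_def by simp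
    moreover have "lp < n" using n_eq by simp
    ultimately show ?thesis unfolding zx_def lp_def by simp
  qed
  have xc: "\<not> x ! c" using mc by (simp add: matched_def)
  have xdd: "\<not> x ! d" using md by (simp add: matched_def)
  have an: "a < n" and bn: "b < n" and cn: "c < n" and dn: "d < n"
    using npos a_def b_def c_def d_def by auto
  have a_ne_c: "a \<noteq> c" using xa xc by auto
  have d_ne_a: "d \<noteq> a" using xa xdd by auto
  have d_ne_c: "d \<noteq> c"
  proof
    assume "d = c"
    then have "lw = n - 1" using off_inj[of lw n "n - 1" oo] d_o c_o npos n_eq by simp
    then show False using n_eq by simp
  qed

  have zy_upd: "zy = zx[lp := False, c0 := True]"
    unfolding zx_def zy_def lp_def c0_def lu_def lq_def by (simp add: list_update_append)
  have Yrel: "y ! t = (if t = a then False else if t = c then True else x ! t)" if tn: "t < n" for t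
  proof -
    obtain s where s: "s < n" "(i + s) mod n = t" using off_surj[OF tn, of i] by blast
    have xt: "x ! t = zx ! s" using sigma_nth[of zx i s] lzx npos xs s by (simp add: add.commute)
    have yt: "y ! t = zy ! s" using sigma_nth[of zy i s] lzy npos ys s by (simp add: add.commute)
    have lpn: "lp < n" and c0n: "c0 < n" and lpc0: "lp \<noteq> c0" using n_eq c0_def by auto
    have ta: "t = a \<longleftrightarrow> s = lp"
      using off_inj[of s n lp i] s lpn a_def lp_def by (auto simp: add.commute)
    have tc: "t = c \<longleftrightarrow> s = c0"
      using off_inj[of s n c0 i] s c0n c_c0 by (auto simp: add.commute)
    show ?thesis using xt yt ta tc zy_upd lpc0 lzx s(1) lpn c0n by (auto simp: nth_list_update)
  qed
  have ya: "\<not> y ! a" using Yrel an by simp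
  have yc: "y ! c" using Yrel cn a_ne_c by simp
  have ydd: "\<not> y ! d" using Yrel dn d_ne_a d_ne_c xdd by simp

  define Hx where "Hx = W x oo"
  define Hy where "Hy = W y oo"
  have Hx_step: "Hx (Suc t) = Hx t + (if x ! ((oo + t) mod n) then 1 else -1)" for t
    unfolding Hx_def using W_Suc[of x oo t] lx by simp
  have Hy_step: "Hy (Suc t) = Hy t + (if y ! ((oo + t) mod n) then 1 else -1)" for t
    unfolding Hy_def using W_Suc[of y oo t] ly by simp
  have Hx_st: "\<bar>Hx (Suc t) - Hx t\<bar> \<le> 1" for t unfolding Hx_def by (rule W_step)
  have Hx_n: "Hx n = 2 * int k - int n" unfolding Hx_def using W_n[of x oo] lx cx npos by simp
  have Hx_0: "Hx 0 = 0" unfolding Hx_def by simp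
  have Hx_d: "Hx (lw + 1) = -1"
  proof -
    have oo_c: "oo = (c0 + 1) + i" by (simp add: oo_def c0_def)
    have "Hx (lw + 1) = W (sigma i zx) ((c0 + 1) + i) (lw + 1)" unfolding Hx_def xs oo_c ..
    also have "\<dots> = W zx (c0 + 1) (lw + 1)" by (rule W_sigma) (simp add: lzx npos)
    also have "\<dots> = -1"
      using dyck_W_neg[OF dw, of zx "p @ [True] @ u @ [False] @ q @ [False]" r]
      unfolding zx_def c0_def lp_def lu_def lq_def lw_def by (simp add: add.assoc)
    finally show ?thesis .
  qed
  have Wa_pos: "\<forall>m. 0 < m \<and> m < lu + 2 \<longrightarrow> W x a m > 0"
    and Wa_0: "W x a (lu + 2) = 0"
  proof -
    have e: "W x a m = W zx lp m" for m
      unfolding a_def using W_mod[of x "lp + i" m] W_sigma[of zx i lp m] lzx lx npos xs lp_def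
      by simp
    have zz: "zx = p @ True # u @ False # (q @ False # w @ False # r)" unfolding zx_def by simp
    show "\<forall>m. 0 < m \<and> m < lu + 2 \<longrightarrow> W x a m > 0"
      using dyck_W(1)[OF du zz] e lp_def lu_def by simp
    show "W x a (lu + 2) = 0"
      using dyck_W(2)[OF du zz] e lp_def lu_def by simp
  qed
  have HxA: "Hx (a' + m) = Hx a' + W x a m" for m
    unfolding Hx_def using W_add[of x oo a' m] lx npos a_o by simp
  have Hx_shift: "Hx (t + m) = Hx t + W x ((oo + t) mod n) m" for t m
    unfolding Hx_def using W_add[of x oo t m] lx npos by simp

  have Hy_shift: "Hy (t + m) = Hy t + W y ((oo + t) mod n) m" for t m
    unfolding Hy_def using W_add[of y oo t m] ly npos by simp
  have Hx_a1: "Hx (a' + 1) = Hx a' + 1"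
  proof -
    have "x ! ((oo + a') mod n)" using xa a_o by simp
    then show ?thesis using Hx_step[of a'] by simp
  qed

  have HY: "Hy t = Hx t - (if a' < t \<and> t < n then 2 else 0)" if "t \<le> n" for t
    using that
  proof (induction t)
    case 0 show ?case by (simp add: Hx_def Hy_def)
  next
    case (Suc t)
    then have tn: "t < n" by simp
    have IH: "Hy t = Hx t - (if a' < t \<and> t < n then 2 else 0)" using Suc by simp
    define P where "P = (oo + t) mod n"
    have Pn: "P < n" using npos P_def by simp
    have Pa: "P = a \<longleftrightarrow> t = a'" using off_inj[of t n a' oo] tn a'lt a_o P_def by auto
    have Pc: "P = c \<longleftrightarrow> t = n - 1" using off_inj[of t n "n - 1" oo] tn npos c_o P_def by auto
    have yP: "y ! P = (if P = a then False else if P = c then True else x ! P)" using Yrel Pn by simp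
    have hx: "Hx (Suc t) = Hx t + (if x ! P then 1 else -1)" using Hx_step[of t] P_def by simp
    have hy: "Hy (Suc t) = Hy t + (if y ! P then 1 else -1)" using Hy_step[of t] P_def by simp
    show ?case
    proof (cases "t = a'")
      case True
      then show ?thesis using hx hy IH Pa yP xa a'lt by auto
    next
      case False
      note ta = False
      show ?thesis
      proof (cases "t = n - 1")
        case True
        then have "P = c" using Pc by simp
        then show ?thesis using hx hy IH yP xc a'lt True tn a_ne_c by auto
      next
        case False
        then have "P \<noteq> a" "P \<noteq> c" using Pa Pc ta by auto
        then show ?thesis using hx hy IH yP False ta tn by auto
      qed
    qed
  qed

  have F1: "\<forall>s<n. Hx n < Hx s"
  proof (rule ccontr)
    assume "\<not> (\<forall>s<n. Hx n < Hx s)"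
    then obtain s where s: "s < n" "Hx s \<le> Hx n" by force
    have xc': "\<not> x ! ((oo + (n - 1)) mod n)" using xc c_o by simp
    have hn1: "Hx n = Hx (n - 1) - 1" using Hx_step[of "n - 1"] xc' npos by simp
    have sn1: "s \<le> n - 1" using s by simp
    obtain t where t: "s \<le> t" "t < n - 1" "Hx t = Hx n" "Hx (Suc t) = Hx n + 1"
      "\<forall>t'. t < t' \<and> t' \<le> n - 1 \<longrightarrow> Hx t' > Hx n"
      using last_cross[of Hx s "Hx n" "n - 1", OF Hx_st s(2) _ sn1] hn1 by auto
    define T where "T = (oo + t) mod n"
    have Tn: "T < n" using npos T_def by simp
    have xT: "x ! T" using Hx_step[of t] t(3,4) T_def by (auto split: if_splits)
    have WT: "W x T m = Hx (t + m) - Hx t" for m using Hx_shift[of t m] T_def by simp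
    have ne: "\<forall>m'. 0 < m' \<and> m' < n - t \<longrightarrow> W x T m' \<noteq> 0"
    proof (intro allI impI)
      fix m' assume "0 < m' \<and> m' < n - t"
      then have "Hx (t + m') > Hx n" using t(5) by auto
      then show "W x T m' \<noteq> 0" using WT t(3) by simp
    qed
    have W0: "W x T (n - t) = 0" using WT t(2,3) by simp
    have "match x T = (T + (n - t) - 1) mod length x"
      by (rule match_eq(1)[OF _ W0 ne]) (use t in simp)
    also have "\<dots> = ((oo + t) mod n + (n - t - 1)) mod n" using lx T_def t by simp
    also have "\<dots> = (oo + t + (n - t - 1)) mod n" by (rule mod_add_left_eq)
    also have "oo + t + (n - t - 1) = oo + (n - 1)" using t by simp
    finally have "match x T = c" using c_o by simp
    then have "matched x c" using xT Tn lx unfolding matched_def by auto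
    then show False using mc by simp
  qed

  have F3: "\<forall>s\<le>a'. Hx a' \<le> Hx s"
  proof (rule ccontr)
    assume "\<not> (\<forall>s\<le>a'. Hx a' \<le> Hx s)"
    then obtain s where s: "s \<le> a'" "Hx s < Hx a'" by force
    define v where "v = Hx a' - 1"
    have sv: "Hx s \<le> v" using s v_def by simp
    have av: "Hx a' > v" using v_def by simp
    obtain t where t: "s \<le> t" "t < a'" "Hx t = v" "Hx (Suc t) = v + 1"
      "\<forall>t'. t < t' \<and> t' \<le> a' \<longrightarrow> Hx t' > v"
      using last_cross[of Hx s v a', OF Hx_st sv av s(1)] by auto
    have tn: "t < n" using t a'lt by simp
    define T where "T = (oo + t) mod n"
    have Tn: "T < n" using npos T_def by simp
    have xT: "x ! T" using Hx_step[of t] t(3,4) T_def by (auto split: if_splits)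
    have WT: "W x T m = Hx (t + m) - Hx t" for m using Hx_shift[of t m] T_def by simp
    have nv: "Hx n < v" using F1 tn t(3) by auto
    define e where "e = (LEAST e. t < e \<and> Hx e \<le> v)"
    have e1: "t < e \<and> Hx e \<le> v" unfolding e_def by (rule LeastI[of _ n]) (use tn nv in auto)
    have e2: "e \<le> n" unfolding e_def by (rule Least_le) (use tn nv in auto)
    have e3: "Hx e' > v" if "t < e'" "e' < e" for e'
    proof -
      have "\<not> (t < e' \<and> Hx e' \<le> v)" using not_less_Least[of e' "\<lambda>e. t < e \<and> Hx e \<le> v"] that(2)
        unfolding e_def by blast
      then show ?thesis using that(1) by simp
    qed
    have ge: "a' + lu + 2 < e"
    proof (rule ccontr)
      assume "\<not> a' + lu + 2 < e"
      then have ee: "e \<le> a' + lu + 2" by simp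
      show False
      proof (cases "e \<le> a'")
        case True then show False using t(5) e1 by auto
      next
        case False
        define m where "m = e - a'"
        have m: "e = a' + m" "0 < m" "m \<le> lu + 2" using ee False unfolding m_def by auto
        have "W x a m \<ge> 0"
        proof (cases "m < lu + 2")
          case True then show ?thesis using Wa_pos m(2) by (simp add: less_imp_le)
        next
          case False then have "m = lu + 2" using m(3) by simp
          then show ?thesis using Wa_0 by simp
        qed
        then have "Hx e \<ge> Hx a'" using HxA[of m] m by simp
        then show False using e1 v_def by simp
      qed
    qed
    have He: "Hx e = v"
    proof -
      have "t < e - 1" "e - 1 < e" using ge t by auto
      then have "Hx (e - 1) > v" using e3 by blast
      moreover have "Suc (e - 1) = e" using ge by simp
      moreover have "\<bar>Hx e - Hx (e - 1)\<bar> \<le> 1" using Hx_st[of "e - 1"] calculation(2) by simp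
      ultimately show ?thesis using e1 by linarith
    qed
    have en: "e < n" using e2 He nv by (cases "e = n") auto
    have ne: "\<forall>m'. 0 < m' \<and> m' < e - t \<longrightarrow> W x T m' \<noteq> 0"
    proof (intro allI impI)
      fix m' assume "0 < m' \<and> m' < e - t"
      then have "Hx (t + m') > v" using e3[of "t + m'"] by auto
      then show "W x T m' \<noteq> 0" using WT t(3) by simp
    qed
    have W0: "W x T (e - t) = 0" using WT t(3) He e1 by simp
    have "match x T = (T + (e - t) - 1) mod length x"
      by (rule match_eq(1)[OF _ W0 ne]) (use e1 in simp)
    also have "\<dots> = ((oo + t) mod n + (e - 1 - t)) mod n" using lx T_def e1 by simp
    also have "\<dots> = (oo + t + (e - 1 - t)) mod n" by (rule mod_add_left_eq)
    also have "oo + t + (e - 1 - t) = oo + (e - 1)" using e1 by simp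
    finally have mT: "match x T = (oo + (e - 1)) mod n" .
    have Ta: "T \<noteq> a" using off_inj[of t n a' oo] tn a'lt a_o T_def t(2) by auto
    have ain: "a \<in> cyc_interval (length x) T (match x T)"
      unfolding T_def a_o lx mT[unfolded T_def] by (rule in_cyc) (use t ge en in auto)
    have bin: "match x a \<in> cyc_interval (length x) T (match x T)"
      unfolding T_def ma b_o lx mT[unfolded T_def] by (rule in_cyc) (use t ge en in auto)
    show False using va Ta xT ain bin Tn lx unfolding visible_def by blast
  qed

  have AU: "\<not> matched y a"
  proof
    assume "matched y a"
    then obtain i' where i': "i' < n" "y ! i'" "match y i' = a" using ya ly by (auto simp: matched_def)
    obtain m0 where m0: "0 < m0" "m0 \<le> n" "W y i' m0 = 0" "match y i' = (i' + m0 - 1) mod n"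
      using match_props[OF c2y, of i'] i' ly by auto
    obtain s where s: "s < n" "(oo + s) mod n = i'" using off_surj[OF i'(1), of oo] by blast
    have Hys: "Hy (s + m0) = Hy s" using Hy_shift[of s m0] s m0 by simp
    have "(oo + (s + (m0 - 1))) mod n = ((oo + s) mod n + (m0 - 1)) mod n"
      by (simp add: mod_add_left_eq add.assoc)
    also have "\<dots> = (oo + a') mod n" using s m0 i' a_o by simp
    finally have "((s + (m0 - 1)) + oo) mod n = (a' + oo) mod n" by (simp add: add.commute)
    then have "(s + (m0 - 1)) mod n = a' mod n" by (rule mod_cancel_nat)
    then have sm: "(s + (m0 - 1)) mod n = a'" using a'lt by simp
    have Hy_a1: "Hy (a' + 1) = Hx a' - 1" using HY[of "a' + 1"] a'lt Hx_a1 by simp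
    show False
    proof (cases "s + (m0 - 1) < n")
      case True
      then have e: "s + m0 = a' + 1" using sm m0 by simp
      then have "s \<le> a'" using m0 by simp
      then have "Hy s = Hx s" using HY[of s] a'lt by simp
      moreover have "Hx a' \<le> Hx s" using F3 \<open>s \<le> a'\<close> by simp
      ultimately show False using Hys e Hy_a1 by simp
    next
      case False
      then have "(s + (m0 - 1)) mod n = s + (m0 - 1) - n" using s m0 by (simp add: le_mod_geq)
      then have e: "s + m0 = (a' + 1) + n" using sm m0 False by simp
      then have sa: "a' < s" using m0 by simp
      have "Hy ((a' + 1) + n) = Hy (a' + 1) + W y ((oo + (a' + 1)) mod n) n" by (rule Hy_shift)
      also have "W y ((oo + (a' + 1)) mod n) n = 2 * int k - int n"
        using W_n[of y] cy ly npos by simp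
      finally have h1: "Hy s = Hx a' - 1 + 2 * int k - int n" using Hys e Hy_a1 by simp
      have "Hy s = Hx s - 2" using HY[of s] sa s by simp
      moreover have "Hx s > 2 * int k - int n" using F1 s Hx_n by auto
      moreover have "Hx a' \<le> -1" using F3 a'ge Hx_d by auto
      ultimately show False using h1 by simp
    qed
  qed

  have myc: "match y c = d"
  proof -
    have Wyc: "W y c m = W zy c0 m" for m
      using W_mod[of y "c0 + i" m] W_sigma[of zy i c0 m] lzy ly npos ys c_c0 by simp
    have zz: "zy = (p @ False # u @ False # q) @ True # w @ False # r" unfolding zy_def by simp
    have lpre: "length (p @ False # u @ False # q) = c0" unfolding c0_def lp_def lu_def lq_def by simp
    have W0: "W y c (lw + 2) = 0" using dyck_W(2)[OF dw zz] Wyc lpre lw_def by simp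
    have ne: "\<forall>m'. 0 < m' \<and> m' < lw + 2 \<longrightarrow> W y c m' \<noteq> 0"
      using dyck_W(1)[OF dw zz] Wyc lpre lw_def by force
    have "match y c = (c + (lw + 2) - 1) mod length y" by (rule match_eq(1)[OF _ W0 ne]) simp
    also have "\<dots> = ((c0 + i) mod n + (lw + 1)) mod n" using ly c_c0 by simp
    also have "\<dots> = (c0 + i + (lw + 1)) mod n" by (rule mod_add_left_eq)
    also have "\<dots> = d"
    proof -
      have e: "c0 + i + (lw + 1) = length p + 3 + length u + length q + length w + i"
        unfolding c0_def lp_def lu_def lq_def lw_def by simp
      show ?thesis by (simp only: e d_def)
    qed
    finally show ?thesis .
  qed
  have mydd: "matched y d" using myc yc cn ly unfolding matched_def by auto

  have fx: "f x \<in> Xnk n k" "kneser_adj n k x (f x)" using f_good[OF xX k2] by auto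
  have fy: "f y \<in> Xnk n k" "kneser_adj n k y (f y)" using f_good[OF yX k2] by auto
  have fxi: "f x ! j \<longleftrightarrow> \<not> x ! j \<and> matched x j" if "j < n" for j using f_iff[of j x] that lx by simp
  have fyi: "f y ! j \<longleftrightarrow> \<not> y ! j \<and> matched y j" if "j < n" for j using f_iff[of j y] that ly by simp
  have adj1: "kneser_adj n k (f x) y"
    unfolding kneser_adj_def using fx(1) yX
  proof (intro conjI allI impI; simp?)
    fix j assume j: "j < n"
    show "f x ! j \<longrightarrow> \<not> y ! j" using Yrel[OF j] fxi[OF j] mc by (auto split: if_splits)
  qed
  have adj2: "kneser_adj n k (f y) x"
    unfolding kneser_adj_def using fy(1) xX
  proof (intro conjI allI impI; simp?)
    fix j assume j: "j < n"
    show "f y ! j \<longrightarrow> \<not> x ! j" using Yrel[OF j] fyi[OF j] AU xc by (auto split: if_splits)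
  qed
  have d1: "x \<noteq> f x" using xa fxi[OF an] by auto
  have d2: "x \<noteq> y" using xa ya by auto
  have d3: "x \<noteq> f y" using xa fyi[OF an] AU by auto
  have d4: "f x \<noteq> y" using yc fxi[OF cn] mc by auto
  have d5: "f x \<noteq> f y" using fxi[OF dn] fyi[OF dn] md mydd ydd by auto
  have d6: "y \<noteq> f y" using yc fyi[OF cn] by auto
  show ?thesis unfolding four_cycle_def using d1 d2 d3 d4 d5 d6 fx fy adj1 adj2 by simp
qed



lemma ord_case:
  assumes "k \<ge> 1" and "n \<ge> 2 * k + 1" and "connector_ord n k x y"
  shows "four_cycle n k x (f x) y (f y)"
proof -
  from assms(3) obtain i u w p q r where xX: "x \<in> Xnk n k" and yX: "y \<in> Xnk n k"
    and du: "dyck u" and dw: "dyck w"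
    and xd: "x = sigma i (p @ [True] @ u @ [False] @ q @ [False] @ w @ [False] @ r)"
    and yd: "y = sigma i (p @ [False] @ u @ [False] @ q @ [True] @ w @ [False] @ r)"
    and rest: "match x ((length p + i) mod n) = (length p + 1 + length u + i) mod n \<and>
        visible x ((length p + i) mod n) \<and>
        \<not> matched x ((length p + 2 + length u + length q + i) mod n) \<and>
        \<not> matched x ((length p + 3 + length u + length q + length w + i) mod n)"
    unfolding connector_ord_def Let_def by blast
  show ?thesis
    using core[OF assms(1,2) xX yX du dw xd yd refl refl refl refl] rest by (elim conjE)
qed

lemma four_cycle_sym:
  "four_cycle n k y (f y) x (f x) \<Longrightarrow> four_cycle n k x (f x) y (f y)"
proof -
  assume h: "four_cycle n k y (f y) x (f x)"
  have sym: "kneser_adj n k a b \<Longrightarrow> kneser_adj n k b a" for a b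
    unfolding kneser_adj_def by blast
  have "distinct [x, f x, y, f y]" using h unfolding four_cycle_def by auto
  then show ?thesis using h sym unfolding four_cycle_def by blast
qed

theorem mainTheorem11:
  fixes n k :: nat and x y :: "bool list"
  assumes "k \<ge> 1" and "n \<ge> 2 * k + 1" and "connector n k x y"
  shows "four_cycle n k x (f x) y (f y)"
proof -
  have "connector_ord n k x y \<or> connector_ord n k y x" using assms(3) unfolding connector_def .
  then show ?thesis
  proof
    assume "connector_ord n k x y" then show ?thesis by (rule ord_case[OF assms(1,2)])
  next
    assume "connector_ord n k y x"
    then have "four_cycle n k y (f y) x (f x)" by (rule ord_case[OF assms(1,2)])
    then show ?thesis by (rule four_cycle_sym)
  qed
qed


end
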